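(* Let $G=(V,E)$ be a connected graph and $\Theta:E\to[0,\pi/2]$. Suppose that $P$ is a disk pattern in $\mathbb{C}$ which realizes $(G,\Theta)$. If $P$ is locally finite in $\mathbb{C}$, then $G$ is VEL-parabolic.
   Context: A disk pattern in $\mathbb{C}$ is a collection of closed round disks in $\mathbb{C}$ in which no disk has its boundary contained in the union of two other disks and no disk is the Hausdorff limit of a sequence of distinct disks. Its contact graph has one vertex per disk, with an edge when the disks intersect. The dihedral angle of two intersecting disks $D_1,D_2$ is the angle in $[0,\pi)$ between the clockwise tangent of $\partial D_1$ and the counterclockwise tangent of $\partial D_2$ at a point of $\partial D_1\cap\partial D_2$. Let $\tilde G$ be obtained from $G$ by adding the edge $[v_1,v_3]$ (if not present) whenever $v_0,v_1,v_2,v_3$ form a simple loop with $\Theta([v_{i-1},v_i])=\pi/2$, $i=1,\dots,4$ ($v_4=v_0$), and $\Theta([v_0,v_2])=0$; $\tilde\Theta=\Theta$ on $E$ and $0$ on added edges. A pattern $P=\{P(v)\}_{v\in V}$ realizes $(G,\Theta)$ if its contact graph is (via $v\mapsto P(v)$) isomorphic to $\tilde G$ with dihedral angles $\tilde\Theta$. Locally finite in $\mathbb{C}$: each compact subset of $\mathbb{C}$ meets only finitely many disks. Vertex extremal length: a vertex metric is $\eta:V\to[0,\infty)$, with area $\sum_v\eta(v)^2$; a vertex curve $\gamma\subseteq V$ has length $\sum_{v\in\gamma}\eta(v)$. For a family $\Gamma$ of vertex curves, $\eta$ is admissible if every $\gamma\in\Gamma$ has length $\ge1$; $\mathrm{MOD}(\Gamma)$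 is the infimum of areas of admissible metrics and $\mathrm{VEL}(\Gamma)=1/\mathrm{MOD}(\Gamma)$ ($+\infty$ if $\Gamma$ is empty). A path is a finite or infinite sequence of vertices with consecutive ones adjacent in $G$, identified with its vertex set. For nonvoid $V_1$, a path joining $V_1$ and $\infty$ starts at a vertex of $V_1$ and passes through infinitely many vertices; $\mathrm{VEL}(V_1,\infty)$ is the VEL of the family of such paths. A connected graph is VEL-parabolic if $\mathrm{VEL}(V_0,\infty)=\infty$ for a (equivalently any) finite nonvoid $V_0\subseteq V$. *)

theory Defs
  imports "HOL-Analysis.Analysis"
begin

text \<open>A graph is given by a vertex set V and a symmetric, irreflexive adjacency
  relation adj on V. Undirected edges are the 2-sets {u,w} with adj u w.\<close>

definition simple_graph :: "'v set \<Rightarrow> ('v \<Rightarrow> 'v \<Rightarrow> bool) \<Rightarrow> bool" where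
  "simple_graph V adj \<longleftrightarrow>
     (\<forall>u w. adj u w \<longrightarrow> u \<in> V \<and> w \<in> V \<and> u \<noteq> w \<and> adj w u)"

definition connected_graph :: "'v set \<Rightarrow> ('v \<Rightarrow> 'v \<Rightarrow> bool) \<Rightarrow> bool" where
  "connected_graph V adj \<longleftrightarrow> V \<noteq> {} \<and> (\<forall>u\<in>V. \<forall>w\<in>V. adj\<^sup>*\<^sup>* u w)"

definition added_edge :: "'v set \<Rightarrow> ('v \<Rightarrow> 'v \<Rightarrow> bool) \<Rightarrow> ('v set \<Rightarrow> real) \<Rightarrow> 'v \<Rightarrow> 'v \<Rightarrow> bool" where
  "added_edge V adj \<Theta> v1 v3 \<longleftrightarrow>
     (\<exists>v0 v2. v0 \<in> V \<and> v1 \<in> V \<and> v2 \<in> V \<and> v3 \<in> V \<and> distinct [v0, v1, v2, v3] \<and>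
        adj v0 v1 \<and> adj v1 v2 \<and> adj v2 v3 \<and> adj v3 v0 \<and>
        \<Theta> {v0, v1} = pi / 2 \<and> \<Theta> {v1, v2} = pi / 2 \<and>
        \<Theta> {v2, v3} = pi / 2 \<and> \<Theta> {v3, v0} = pi / 2 \<and>
        adj v0 v2 \<and> \<Theta> {v0, v2} = 0)"

definition tilde_adj :: "'v set \<Rightarrow> ('v \<Rightarrow> 'v \<Rightarrow> bool) \<Rightarrow> ('v set \<Rightarrow> real) \<Rightarrow> 'v \<Rightarrow> 'v \<Rightarrow> bool" where
  "tilde_adj V adj \<Theta> u w \<longleftrightarrow> adj u w \<or> added_edge V adj \<Theta> u w"

definition tilde_Theta :: "('v \<Rightarrow> 'v \<Rightarrow> bool) \<Rightarrow> ('v set \<Rightarrow> real) \<Rightarrow> 'v \<Rightarrow> 'v \<Rightarrow> real" where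
  "tilde_Theta adj \<Theta> u w = (if adj u w then \<Theta> {u, w} else 0)"

text \<open>A closed round disk is represented by (center, radius) with radius > 0.\<close>

definition disk :: "complex \<times> real \<Rightarrow> complex set" where
  "disk d = cball (fst d) (snd d)"

definition circ :: "complex \<times> real \<Rightarrow> complex set" where
  "circ d = sphere (fst d) (snd d)"

definition hausdorff_dist :: "complex set \<Rightarrow> complex set \<Rightarrow> real" where
  "hausdorff_dist S T = max (SUP x\<in>S. infdist x T) (SUP y\<in>T. infdist y S)"

definition disk_pattern :: "(complex \<times> real) set \<Rightarrow> bool" where
  "disk_pattern D \<longleftrightarrow>
     (\<forall>d\<in>D. snd d > 0) \<and>
     (\<forall>d\<in>D. \<forall>d1\<in>D. \<forall>d2\<in>D. d1 \<noteq> d \<and> d2 \<noteq> d \<longrightarrow> \<not> circ d \<subseteq> disk d1 \<union> disk d2) \<and>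
     (\<forall>d\<in>D. \<not> (\<exists>f::nat \<Rightarrow> complex \<times> real. (\<forall>n. f n \<in> D) \<and> inj f \<and>
                  (\<lambda>n. hausdorff_dist (disk (f n)) (disk d)) \<longlonglongrightarrow> 0))"

definition vec_angle :: "complex \<Rightarrow> complex \<Rightarrow> real" where
  "vec_angle x y = arccos ((x \<bullet> y) / (norm x * norm y))"

text \<open>Dihedral angle of D1 and D2: angle in [0,pi) between the clockwise tangent of
  the boundary of D1 and the counterclockwise tangent of the boundary of D2 at a
  common boundary point p.\<close>
definition has_dihedral_angle :: "complex \<times> real \<Rightarrow> complex \<times> real \<Rightarrow> real \<Rightarrow> bool" where
  "has_dihedral_angle d1 d2 \<theta> \<longleftrightarrow>
     (\<exists>p \<in> circ d1 \<inter> circ d2.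
        \<theta> = vec_angle (- \<i> * (p - fst d1)) (\<i> * (p - fst d2)) \<and> 0 \<le> \<theta> \<and> \<theta> < pi)"

definition realizes ::
  "('v \<Rightarrow> complex \<times> real) \<Rightarrow> 'v set \<Rightarrow> ('v \<Rightarrow> 'v \<Rightarrow> bool) \<Rightarrow> ('v set \<Rightarrow> real) \<Rightarrow> bool" where
  "realizes P V adj \<Theta> \<longleftrightarrow>
     inj_on P V \<and> disk_pattern (P ` V) \<and>
     (\<forall>u\<in>V. \<forall>w\<in>V. u \<noteq> w \<longrightarrow>
        (disk (P u) \<inter> disk (P w) \<noteq> {} \<longleftrightarrow> tilde_adj V adj \<Theta> u w)) \<and>
     (\<forall>u\<in>V. \<forall>w\<in>V. tilde_adj V adj \<Theta> u w \<longrightarrow>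
        has_dihedral_angle (P u) (P w) (tilde_Theta adj \<Theta> u w))"

definition locally_finite_pattern :: "('v \<Rightarrow> complex \<times> real) \<Rightarrow> 'v set \<Rightarrow> bool" where
  "locally_finite_pattern P V \<longleftrightarrow>
     (\<forall>K. compact K \<longrightarrow> finite {v\<in>V. disk (P v) \<inter> K \<noteq> {}})"

definition vertex_metric :: "'v set \<Rightarrow> ('v \<Rightarrow> real) \<Rightarrow> bool" where
  "vertex_metric V \<eta> \<longleftrightarrow> (\<forall>v\<in>V. \<eta> v \<ge> 0)"

definition metric_area :: "'v set \<Rightarrow> ('v \<Rightarrow> real) \<Rightarrow> ennreal" where
  "metric_area V \<eta> = (\<Sum>\<^sub>\<infinity>v\<in>V. ennreal ((\<eta> v)\<^sup>2))"

definition curve_length :: "('v \<Rightarrow> real) \<Rightarrow> 'v set \<Rightarrow> ennreal" where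
  "curve_length \<eta> \<gamma> = (\<Sum>\<^sub>\<infinity>v\<in>\<gamma>. ennreal (\<eta> v))"

definition admissible :: "'v set \<Rightarrow> 'v set set \<Rightarrow> ('v \<Rightarrow> real) \<Rightarrow> bool" where
  "admissible V \<Gamma> \<eta> \<longleftrightarrow> vertex_metric V \<eta> \<and> (\<forall>\<gamma>\<in>\<Gamma>. curve_length \<eta> \<gamma> \<ge> 1)"

definition MOD :: "'v set \<Rightarrow> 'v set set \<Rightarrow> ennreal" where
  "MOD V \<Gamma> = (INF \<eta>\<in>{\<eta>. admissible V \<Gamma> \<eta>}. metric_area V \<eta>)"

definition VEL :: "'v set \<Rightarrow> 'v set set \<Rightarrow> ennreal" where
  "VEL V \<Gamma> = (if \<Gamma> = {} then \<infinity> else inverse (MOD V \<Gamma>))"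

definition paths_to_infinity :: "('v \<Rightarrow> 'v \<Rightarrow> bool) \<Rightarrow> 'v set \<Rightarrow> 'v set set" where
  "paths_to_infinity adj V1 =
     {range p | p :: nat \<Rightarrow> 'v. p 0 \<in> V1 \<and> (\<forall>n. adj (p n) (p (Suc n))) \<and> infinite (range p)}"

definition VEL_parabolic :: "'v set \<Rightarrow> ('v \<Rightarrow> 'v \<Rightarrow> bool) \<Rightarrow> bool" where
  "VEL_parabolic V adj \<longleftrightarrow>
     (\<exists>V0. finite V0 \<and> V0 \<noteq> {} \<and> V0 \<subseteq> V \<and> VEL V (paths_to_infinity adj V0) = \<infinity>)"

end

theory Submission
  imports Defs
begin
lemma disks_disjoint_far:
  fixes c1 c2 :: complex and r1 r2 :: real
  assumes "r1 > 0" "r2 > 0" "cball c1 r1 \<inter> cball c2 r2 = {}"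
  shows "cmod (c1 - c2) > r1 + r2"
proof (rule ccontr)
  assume "\<not> ?thesis"
  hence le: "cmod (c1 - c2) \<le> r1 + r2" by simp
  define z where "z = c1 + (r1/(r1+r2)) *\<^sub>R (c2 - c1)"
  have "dist c1 z = r1/(r1+r2) * cmod (c2 - c1)"
    using assms by (simp add: z_def dist_norm)
  also have "\<dots> \<le> r1/(r1+r2) * (r1 + r2)" using le assms
    by (intro mult_left_mono) (auto simp: norm_minus_commute)
  also have "\<dots> = r1" using assms by simp
  finally have z1: "z \<in> cball c1 r1" by simp
  have "c2 - z = (1 - r1/(r1+r2)) *\<^sub>R (c2 - c1)"
    by (simp add: z_def algebra_simps)
  also have "1 - r1/(r1+r2) = r2/(r1+r2)" using assms by (simp add: field_simps)
  finally have "dist c2 z = r2/(r1+r2) * cmod (c2 - c1)"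
    using assms by (simp add: dist_norm norm_minus_commute)
  also have "\<dots> \<le> r2/(r1+r2) * (r1 + r2)" using le assms
    by (intro mult_left_mono) (auto simp: norm_minus_commute)
  also have "\<dots> = r2" using assms by simp
  finally have z2: "z \<in> cball c2 r2" by simp
  from z1 z2 assms(3) show False by blast
qed

lemma angle_sep:
  fixes c1 c2 p :: complex and r1 r2 \<theta> :: real
  assumes "r1 > 0" "r2 > 0" "cmod (p - c1) = r1" "cmod (p - c2) = r2"
    and "\<theta> = vec_angle (- \<i> * (p - c1)) (\<i> * (p - c2))" "\<theta> \<le> pi/2"
  shows "(cmod (c1 - c2))\<^sup>2 \<ge> r1\<^sup>2 + r2\<^sup>2"
proof -
  define A where "A = p - c1"
  define B where "B = p - c2"
  have nA: "(Re A)\<^sup>2 + (Im A)\<^sup>2 = r1\<^sup>2" using assms(3) unfolding A_def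
    by (metis cmod_power2)
  have nB: "(Re B)\<^sup>2 + (Im B)\<^sup>2 = r2\<^sup>2" using assms(4) unfolding B_def
    by (metis cmod_power2)
  have ip: "(- \<i> * A) \<bullet> (\<i> * B) = - (Re A * Re B + Im A * Im B)"
    by (simp add: inner_complex_def)
  have nn: "norm (- \<i> * A) * norm (\<i> * B) = r1 * r2"
    using assms(3,4) by (simp add: A_def B_def norm_mult)
  define t where "t = - (Re A * Re B + Im A * Im B) / (r1 * r2)"
  have "vec_angle (- \<i> * A) (\<i> * B) = arccos t" by (simp only: vec_angle_def ip nn t_def)
  hence th: "\<theta> = arccos t" using assms(5) by (simp add: A_def B_def)
  have cs: "\<bar>(- \<i> * A) \<bullet> (\<i> * B)\<bar> \<le> r1 * r2"
    using Cauchy_Schwarz_ineq2[of "- \<i> * A" "\<i> * B"] nn by simp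
  have t1: "-1 \<le> t" "t \<le> 1" using cs ip assms(1,2) unfolding t_def
    by (auto simp: abs_le_iff field_simps)
  have "cos \<theta> = t" using th t1 cos_arccos by simp
  moreover have "cos \<theta> \<ge> 0"
    using th t1 assms(6) arccos_lbound[of t] by (intro cos_ge_zero) auto
  ultimately have "t \<ge> 0" by simp
  hence dot: "Re A * Re B + Im A * Im B \<le> 0" using assms(1,2) unfolding t_def
    by (simp add: zero_le_divide_iff) (smt (verit) mult_pos_pos)
  have "c1 - c2 = B - A" by (simp add: A_def B_def)
  hence "(cmod (c1 - c2))\<^sup>2 = (Re B - Re A)\<^sup>2 + (Im B - Im A)\<^sup>2"
    by (simp add: cmod_power2)
  also have "\<dots> = (Re A)\<^sup>2 + (Im A)\<^sup>2 + ((Re B)\<^sup>2 + (Im B)\<^sup>2) - 2 * (Re A * Re B + Im A * Im B)"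
    by (simp add: power2_diff algebra_simps)
  finally show ?thesis using nA nB dot by simp
qed

definition quad :: "complex \<Rightarrow> nat" where
  "quad z = (if z = 0 then 0 else if Re z > 0 \<and> Im z \<ge> 0 then 1
     else if Re z \<le> 0 \<and> Im z > 0 then 2 else if Re z < 0 \<and> Im z \<le> 0 then 3 else 4)"

lemma quad_le: "quad z \<le> 4" by (simp add: quad_def)

lemma quad_zero: "quad z = 0 \<longleftrightarrow> z = 0" by (simp add: quad_def)

lemma quad_same:
  assumes "quad a = quad b" "a \<noteq> 0" "b \<noteq> 0"
  shows "Re a * Re b + Im a * Im b > 0"
proof -
  have a: "Re a \<noteq> 0 \<or> Im a \<noteq> 0" using assms(2) complex_eq_iff by auto
  have b: "Re b \<noteq> 0 \<or> Im b \<noteq> 0" using assms(3) complex_eq_iff by auto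
  consider "Re a > 0 \<and> Im a \<ge> 0 \<and> Re b > 0 \<and> Im b \<ge> 0"
    | "Re a \<le> 0 \<and> Im a > 0 \<and> Re b \<le> 0 \<and> Im b > 0"
    | "Re a < 0 \<and> Im a \<le> 0 \<and> Re b < 0 \<and> Im b \<le> 0"
    | "Re a \<ge> 0 \<and> Im a < 0 \<and> Re b \<ge> 0 \<and> Im b < 0"
    using assms a b unfolding quad_def by (auto split: if_splits)
  then show ?thesis
  proof cases
    case 1 then show ?thesis by (smt (verit) mult_nonneg_nonneg mult_pos_pos)
  next
    case 2 then show ?thesis by (smt (verit) mult_nonpos_nonpos mult_pos_pos)
  next
    case 3 then show ?thesis by (smt (verit) mult_nonpos_nonpos mult_neg_neg)
  next
    case 4 then show ?thesis by (smt (verit) mult_nonneg_nonneg mult_neg_neg)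
  qed
qed

locale pat =
  fixes V :: "'v set" and adj :: "'v \<Rightarrow> 'v \<Rightarrow> bool" and P :: "'v \<Rightarrow> complex \<times> real"
  assumes rpos: "\<And>v. v \<in> V \<Longrightarrow> snd (P v) > 0"
    and sep: "\<And>u w. u \<in> V \<Longrightarrow> w \<in> V \<Longrightarrow> u \<noteq> w \<Longrightarrow>
        (cmod (fst (P u) - fst (P w)))\<^sup>2 \<ge> (snd (P u))\<^sup>2 + (snd (P w))\<^sup>2"
    and adjI: "\<And>u w. adj u w \<Longrightarrow> u \<in> V \<and> w \<in> V \<and> disk (P u) \<inter> disk (P w) \<noteq> {}"
    and lf: "locally_finite_pattern P V"
begin

abbreviation c where "c v \<equiv> fst (P v)"
abbreviation r where "r v \<equiv> snd (P v)"

lemma mem_disk: "x \<in> disk (P v) \<longleftrightarrow> cmod (x - c v) \<le> r v"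
  by (simp add: disk_def dist_norm norm_minus_commute)

lemma inner_nonpos:
  assumes "u \<in> V" "w \<in> V" "u \<noteq> w" "x \<in> disk (P u)" "x \<in> disk (P w)"
  shows "Re (c u - x) * Re (c w - x) + Im (c u - x) * Im (c w - x) \<le> 0"
proof -
  define A where "A = c u - x"
  define B where "B = c w - x"
  have s: "(cmod (A - B))\<^sup>2 \<ge> (r u)\<^sup>2 + (r w)\<^sup>2" using sep[OF assms(1-3)] by (simp add: A_def B_def)
  have a: "(cmod A)\<^sup>2 \<le> (r u)\<^sup>2" using assms(4) rpos[OF assms(1)]
    by (simp add: mem_disk A_def norm_minus_commute power_mono)
  have b: "(cmod B)\<^sup>2 \<le> (r w)\<^sup>2" using assms(5) rpos[OF assms(2)]
    by (simp add: mem_disk B_def norm_minus_commute power_mono)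
  have "(cmod (A - B))\<^sup>2 = (cmod A)\<^sup>2 + (cmod B)\<^sup>2 - 2 * (Re A * Re B + Im A * Im B)"
    by (simp add: cmod_power2 power2_diff algebra_simps)
  with s a b show ?thesis by (simp add: A_def B_def)
qed

lemma mult5: "card {v\<in>V. x \<in> disk (P v)} \<le> 5"
proof -
  let ?M = "{v\<in>V. x \<in> disk (P v)}"
  have inj: "inj_on (\<lambda>v. quad (c v - x)) ?M"
  proof (rule inj_onI)
    fix u w assume u: "u \<in> ?M" and w: "w \<in> ?M" and q: "quad (c u - x) = quad (c w - x)"
    show "u = w"
    proof (rule ccontr)
      assume ne: "u \<noteq> w"
      show False
      proof (cases "c u - x = 0")
        case True
        then have "c w - x = 0" using q quad_zero by metis
        with True have "c u = c w" by simp
        with sep[of u w] ne u w rpos[of u] rpos[of w] show False by (simp add: power2_eq_square) (smt (verit) mult_pos_pos)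
      next
        case False
        then have "c w - x \<noteq> 0" using q quad_zero by metis
        with False q quad_same inner_nonpos[of u w x] u w ne show False by force
      qed
    qed
  qed
  have "(\<lambda>v. quad (c v - x)) ` ?M \<subseteq> {0..4}" using quad_le by auto
  from card_inj_on_le[OF inj this] show ?thesis by simp
qed

end

context pat begin

lemma finite_meet: "compact K \<Longrightarrow> finite {v\<in>V. disk (P v) \<inter> K \<noteq> {}}"
  using lf unfolding locally_finite_pattern_def by blast

lemma finite_at: "finite {v\<in>V. x \<in> disk (P v)}"
proof -
  have "{v\<in>V. x \<in> disk (P v)} \<subseteq> {v\<in>V. disk (P v) \<inter> {x} \<noteq> {}}" by auto
  thus ?thesis using finite_meet[of "{x}"] finite_subset by auto
qed

lemma measure_sum_bound:
  assumes S: "finite S" "S \<subseteq> V" and Bc: "\<And>v. v \<in> S \<Longrightarrow> closed (B v)"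
    and Bsub: "\<And>v. v \<in> S \<Longrightarrow> B v \<subseteq> disk (P v) \<inter> C" and C: "closed C"
  shows "(\<Sum>v\<in>S. emeasure lborel (B v)) \<le> 5 * emeasure lborel C"
proof -
  have meas: "\<And>v. v \<in> S \<Longrightarrow> B v \<in> sets lborel" using Bc by auto
  have "(\<Sum>v\<in>S. emeasure lborel (B v)) = (\<Sum>v\<in>S. \<integral>\<^sup>+ x. indicator (B v) x \<partial>lborel)"
    using meas by simp
  also have "\<dots> = (\<integral>\<^sup>+ x. (\<Sum>v\<in>S. indicator (B v) x) \<partial>lborel)"
    using meas by (subst nn_integral_sum) auto
  also have "\<dots> \<le> (\<integral>\<^sup>+ x. 5 * indicator C x \<partial>lborel)"
  proof (rule nn_integral_mono)
    fix x :: complex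
    show "(\<Sum>v\<in>S. indicator (B v) x :: ennreal) \<le> 5 * indicator C x"
    proof (cases "x \<in> C")
      case False
      then have "\<And>v. v \<in> S \<Longrightarrow> x \<notin> B v" using Bsub by blast
      then show ?thesis by simp
    next
      case True
      have "(\<Sum>v\<in>S. indicator (B v) x :: ennreal) = (\<Sum>v\<in>S. if x \<in> B v then 1 else 0)"
        by (intro sum.cong) (auto simp: indicator_def)
      also have "\<dots> = (\<Sum>v\<in>{v\<in>S. x \<in> B v}. 1)"
        by (rule sum.inter_filter[OF S(1), symmetric])
      also have "\<dots> = of_nat (card {v\<in>S. x \<in> B v})" by simp
      also have "card {v\<in>S. x \<in> B v} \<le> card {v\<in>V. x \<in> disk (P v)}"
        using S Bsub finite_at by (intro card_mono) auto
      also have "\<dots> \<le> 5" by (rule mult5)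
      finally show ?thesis using True by (simp add: of_nat_le_iff)
    qed
  qed
  also have "\<dots> = 5 * emeasure lborel C"
    using C by (subst nn_integral_cmult) auto
  finally show ?thesis .
qed

end

lemma sub_ball:
  fixes cc q :: complex and rr a :: real
  assumes a: "a > 0" and rr: "2 * rr > a" and q: "cmod (q - cc) \<le> rr" "cmod q \<le> 2 * a"
  shows "\<exists>ct. cball ct (a/4) \<subseteq> cball cc rr \<and> cball ct (a/4) \<subseteq> cball 0 (3*a)"
proof -
  define s where "s = a/4"
  define d where "d = cmod (cc - q)"
  define t where "t = min 1 (s / d)"
  define ct where "ct = q + t *\<^sub>R (cc - q)"
  have s0: "s > 0" "s < rr" using a rr by (auto simp: s_def)
  have t01: "0 \<le> t" "t \<le> 1" using s0 by (auto simp: t_def d_def)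
  have d1: "d \<le> rr" using q by (simp add: d_def norm_minus_commute)
  have dq: "cmod (ct - q) = t * d" using t01 by (simp add: ct_def d_def)
  have tds: "t * d \<le> s"
  proof (cases "d = 0")
    case True then show ?thesis using s0 by simp
  next
    case False then have "d > 0" by (simp add: d_def)
    then show ?thesis by (simp add: t_def min_def field_simps)
  qed
  have dc: "cmod (cc - ct) = (1 - t) * d"
  proof -
    have "cc - ct = (1 - t) *\<^sub>R (cc - q)" by (simp add: ct_def algebra_simps)
    then show ?thesis using t01 by (simp add: d_def)
  qed
  have key: "s + (1 - t) * d \<le> rr"
  proof (cases "d = 0")
    case True then show ?thesis using s0 by simp
  next
    case dn: False
    show ?thesis
  proof (cases "s / d \<le> 1")
    case True
    then have "t = s / d" by (simp add: t_def)
    moreover have "d > 0" using dn by (simp add: d_def)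
    ultimately have "s + (1 - t) * d = d" by (simp add: field_simps)
    then show ?thesis using d1 by simp
  next
    case False then have "t = 1" by (simp add: t_def)
    then show ?thesis using s0 by simp
  qed
  qed
  have 1: "cball ct s \<subseteq> cball cc rr"
  proof
    fix y assume "y \<in> cball ct s"
    then have "cmod (ct - y) \<le> s" by (simp add: dist_norm)
    moreover have "cmod (cc - y) \<le> cmod (cc - ct) + cmod (ct - y)"
      using norm_triangle_ineq[of "cc - ct" "ct - y"] by simp
    ultimately show "y \<in> cball cc rr" using dc key by (simp add: dist_norm)
  qed
  have 2: "cball ct s \<subseteq> cball 0 (3*a)"
  proof
    fix y assume "y \<in> cball ct s"
    then have "cmod (y - ct) \<le> s" by (simp add: dist_norm norm_minus_commute)
    moreover have "cmod y \<le> cmod q + cmod (ct - q) + cmod (y - ct)"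
      using norm_triangle_ineq[of q "ct - q"] norm_triangle_ineq[of ct "y - ct"] by simp
    ultimately show "y \<in> cball 0 (3*a)" using dq tds q a by (simp add: s_def)
  qed
  from 1 2 show ?thesis unfolding s_def by blast
qed

context pat begin

definition Sc :: "real \<Rightarrow> 'v set" where
  "Sc a = {v\<in>V. \<not> disk (P v) \<subseteq> ball 0 a \<and> disk (P v) \<inter> cball 0 (2*a) \<noteq> {}}"

definition Wt :: "real \<Rightarrow> 'v \<Rightarrow> real" where
  "Wt a v = (if v \<in> Sc a then min (2 * r v) a else 0)"

lemma finite_Sc: "finite (Sc a)"
proof -
  have "Sc a \<subseteq> {v\<in>V. disk (P v) \<inter> cball 0 (2*a) \<noteq> {}}" by (auto simp: Sc_def)
  thus ?thesis using finite_meet[of "cball 0 (2*a)"] finite_subset by auto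
qed

lemma Sc_V: "Sc a \<subseteq> V" by (auto simp: Sc_def)

lemma Wt_nonneg: assumes a: "a > 0" shows "Wt a v \<ge> 0"
proof (cases "v \<in> Sc a")
  case True then have "r v > 0" using rpos Sc_V by auto
  then show ?thesis using True a by (simp add: Wt_def)
next
  case False then show ?thesis by (simp add: Wt_def)
qed

lemma ball_exists:
  assumes a: "a > 0" and v: "v \<in> Sc a"
  shows "\<exists>ct rad. rad > 0 \<and> cball ct rad \<subseteq> disk (P v) \<and> cball ct rad \<subseteq> cball 0 (3*a)
     \<and> (Wt a v)\<^sup>2 \<le> 16 * rad\<^sup>2"
proof -
  from v obtain q where q: "q \<in> disk (P v)" "cmod q \<le> 2*a" and vV: "v \<in> V"
    by (auto simp: Sc_def)
  have rp: "r v > 0" using rpos vV by simp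
  have qc: "cmod (q - c v) \<le> r v" using q mem_disk by simp
  show ?thesis
  proof (cases "2 * r v \<le> a")
    case True
    have W: "Wt a v = 2 * r v" using True v by (simp add: Wt_def)
    have "cball (c v) (r v) \<subseteq> cball 0 (3*a)"
    proof
      fix y assume "y \<in> cball (c v) (r v)"
      then have "cmod (y - c v) \<le> r v" by (simp add: dist_norm norm_minus_commute)
      moreover have "cmod y \<le> cmod q + cmod (c v - q) + cmod (y - c v)"
        using norm_triangle_ineq[of q "c v - q"] norm_triangle_ineq[of "c v" "y - c v"] by simp
      ultimately show "y \<in> cball 0 (3*a)" using qc q True by (simp add: norm_minus_commute)
    qed
    moreover have "(Wt a v)\<^sup>2 \<le> 16 * (r v)\<^sup>2" using W by (simp add: power2_eq_square)
    ultimately show ?thesis using rp by (intro exI[of _ "c v"] exI[of _ "r v"]) (auto simp: disk_def)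
  next
    case False
    have W: "Wt a v = a" using False v by (simp add: Wt_def)
    obtain ct where ct: "cball ct (a/4) \<subseteq> cball (c v) (r v)" "cball ct (a/4) \<subseteq> cball 0 (3*a)"
      using sub_ball[of a "r v" q "c v"] a False qc q by auto
    moreover have "(Wt a v)\<^sup>2 \<le> 16 * (a/4)\<^sup>2" using W by (simp add: power2_eq_square)
    ultimately show ?thesis using a by (intro exI[of _ ct] exI[of _ "a/4"]) (auto simp: disk_def)
  qed
qed

lemma area_scale:
  assumes a: "a > 0"
  shows "(\<Sum>v\<in>Sc a. (Wt a v)\<^sup>2) \<le> 720 * a\<^sup>2"
proof -
  obtain ct rad where cr: "\<And>v. v \<in> Sc a \<Longrightarrow> rad v > 0 \<and> cball (ct v) (rad v) \<subseteq> disk (P v)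
     \<and> cball (ct v) (rad v) \<subseteq> cball 0 (3*a) \<and> (Wt a v)\<^sup>2 \<le> 16 * (rad v)\<^sup>2"
    using ball_exists[OF a] by metis
  define k where "k = unit_ball_vol (real DIM(complex))"
  have k: "k > 0" by (simp add: k_def)
  have em: "\<And>ct rd. rd \<ge> 0 \<Longrightarrow> emeasure lborel (cball (ct::complex) rd) = ennreal (k * rd\<^sup>2)"
    by (simp add: emeasure_cball k_def)
  have "(\<Sum>v\<in>Sc a. emeasure lborel (cball (ct v) (rad v))) \<le> 5 * emeasure lborel (cball (0::complex) (3*a))"
    using cr by (intro measure_sum_bound finite_Sc Sc_V) auto
  also have "\<dots> = ennreal 5 * ennreal (k * (3*a)\<^sup>2)" using a em[of "3*a" 0] by simp
  also have "\<dots> = ennreal (5 * (k * (3*a)\<^sup>2))" by (rule ennreal_mult[symmetric]) (use k in auto)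
  also have "(\<Sum>v\<in>Sc a. emeasure lborel (cball (ct v) (rad v))) = (\<Sum>v\<in>Sc a. ennreal (k * (rad v)\<^sup>2))"
    using cr em by (intro sum.cong) (auto simp: less_imp_le)
  also have "\<dots> = ennreal (\<Sum>v\<in>Sc a. k * (rad v)\<^sup>2)"
    using k by (intro sum_ennreal) auto
  finally have "(\<Sum>v\<in>Sc a. k * (rad v)\<^sup>2) \<le> 5 * (k * (3*a)\<^sup>2)"
    using k by (subst (asm) ennreal_le_iff) auto
  hence "k * (\<Sum>v\<in>Sc a. (rad v)\<^sup>2) \<le> k * (45 * a\<^sup>2)"
    by (simp add: sum_distrib_left power_mult_distrib algebra_simps)
  hence rs: "(\<Sum>v\<in>Sc a. (rad v)\<^sup>2) \<le> 45 * a\<^sup>2" using k by simp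
  have "(\<Sum>v\<in>Sc a. (Wt a v)\<^sup>2) \<le> (\<Sum>v\<in>Sc a. 16 * (rad v)\<^sup>2)"
    using cr by (intro sum_mono) auto
  also have "\<dots> = 16 * (\<Sum>v\<in>Sc a. (rad v)\<^sup>2)" by (simp add: sum_distrib_left)
  finally show ?thesis using rs by simp
qed

end

context pat begin

definition gg :: "real \<Rightarrow> complex \<Rightarrow> real" where
  "gg a z = min (2*a) (max a (cmod z))"

lemma osc:
  assumes a: "a > 0" and v: "v \<in> V" and x: "x \<in> disk (P v)" and y: "y \<in> disk (P v)"
  shows "\<bar>gg a x - gg a y\<bar> \<le> Wt a v"
proof (cases "v \<in> Sc a")
  case True
  have "\<bar>gg a x - gg a y\<bar> \<le> \<bar>cmod x - cmod y\<bar>" by (simp add: gg_def min_def max_def)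
  also have "\<dots> \<le> cmod (x - y)" by (rule norm_triangle_ineq3)
  also have "\<dots> \<le> cmod (x - c v) + cmod (c v - y)"
    using norm_triangle_ineq[of "x - c v" "c v - y"] by simp
  also have "\<dots> \<le> 2 * r v" using x y by (simp add: mem_disk norm_minus_commute)
  finally have 1: "\<bar>gg a x - gg a y\<bar> \<le> 2 * r v" .
  have 2: "\<bar>gg a x - gg a y\<bar> \<le> a" using a unfolding gg_def by (auto simp: min_def max_def abs_le_iff)
  show ?thesis using 1 2 True by (simp add: Wt_def)
next
  case False
  then have "disk (P v) \<subseteq> ball 0 a \<or> disk (P v) \<inter> cball 0 (2*a) = {}" using v by (auto simp: Sc_def)
  then show ?thesis
  proof
    assume "disk (P v) \<subseteq> ball 0 a"
    then have "cmod x < a" "cmod y < a" using x y by auto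
    then show ?thesis using False a by (simp add: gg_def Wt_def)
  next
    assume "disk (P v) \<inter> cball 0 (2*a) = {}"
    then have "cmod x > 2*a" "cmod y > 2*a" using x y by (auto simp: not_le)
    then show ?thesis using False a by (simp add: gg_def Wt_def)
  qed
qed

lemma walk:
  assumes a: "a > 0" and p: "\<And>n. adj (p n) (p (Suc n))" and z: "z \<in> disk (P (p 0))"
  shows "\<forall>x\<in>disk (P (p m)). gg a x - gg a z \<le> (\<Sum>v\<in>p ` {..m}. Wt a v)"
proof (induction m rule: less_induct)
  case (less m)
  have pV: "\<And>n. p n \<in> V" using p adjI by metis
  show ?case
  proof (cases m)
    case 0
    show ?thesis
    proof
      fix x assume "x \<in> disk (P (p m))"
      then show "gg a x - gg a z \<le> (\<Sum>v\<in>p ` {..m}. Wt a v)"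
        using osc[OF a pV[of 0] _ z, of x] 0 by simp
    qed
  next
    case (Suc k)
    show ?thesis
    proof
      fix x assume x: "x \<in> disk (P (p m))"
      show "gg a x - gg a z \<le> (\<Sum>v\<in>p ` {..m}. Wt a v)"
      proof (cases "p m \<in> p ` {..k}")
        case True
        then obtain j where j: "j \<le> k" "p m = p j" by auto
        then have "gg a x - gg a z \<le> (\<Sum>v\<in>p ` {..j}. Wt a v)"
          using less.IH[of j] x Suc by auto
        also have "\<dots> \<le> (\<Sum>v\<in>p ` {..m}. Wt a v)"
          using j Suc Wt_nonneg[OF a] by (intro sum_mono2) auto
        finally show ?thesis .
      next
        case False
        obtain y where y: "y \<in> disk (P (p k))" "y \<in> disk (P (p m))"
          using adjI[OF p[of k]] Suc by auto
        have "gg a x - gg a z = (gg a x - gg a y) + (gg a y - gg a z)" by simp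
        also have "\<dots> \<le> Wt a (p m) + (\<Sum>v\<in>p ` {..k}. Wt a v)"
          using osc[OF a pV[of m] x y(2)] less.IH[of k] y(1) Suc by fastforce
        also have "\<dots> = (\<Sum>v\<in>p ` {..m}. Wt a v)"
          using False Suc by (simp add: atMost_Suc)
        finally show ?thesis .
      qed
    qed
  qed
qed

lemma crossing:
  assumes a: "a > 0" and p: "\<And>n. adj (p n) (p (Suc n))"
    and start: "disk (P (p 0)) \<subseteq> ball 0 a" and fin: "disk (P (p n)) \<inter> cball 0 (2*a) = {}"
  shows "a \<le> (\<Sum>v\<in>p ` {..n}. Wt a v)"
proof -
  have pV: "\<And>n. p n \<in> V" using p adjI by metis
  have z: "c (p 0) \<in> disk (P (p 0))" using rpos[OF pV] by (simp add: mem_disk less_imp_le)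
  have x: "c (p n) \<in> disk (P (p n))" using rpos[OF pV] by (simp add: mem_disk less_imp_le)
  have "cmod (c (p 0)) < a" using start z by auto
  hence gz: "gg a (c (p 0)) = a" using a by (simp add: gg_def)
  have "cmod (c (p n)) > 2*a" using fin x by (auto simp: not_le)
  hence gx: "gg a (c (p n)) = 2*a" using a by (simp add: gg_def)
  show ?thesis using walk[OF a p z, of n] x gz gx by auto
qed

end

lemma sq_sum_single:
  fixes x :: "nat \<Rightarrow> real"
  assumes "finite I" "\<And>i j. i \<in> I \<Longrightarrow> j \<in> I \<Longrightarrow> i \<noteq> j \<Longrightarrow> x i = 0 \<or> x j = 0"
  shows "(\<Sum>i\<in>I. x i)\<^sup>2 = (\<Sum>i\<in>I. (x i)\<^sup>2)"
proof (cases "\<forall>i\<in>I. x i = 0")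
  case True then show ?thesis by simp
next
  case False
  then obtain j where j: "j \<in> I" "x j \<noteq> 0" by auto
  have z: "\<And>i. i \<in> I - {j} \<Longrightarrow> x i = 0" using assms(2) j by blast
  have "(\<Sum>i\<in>I. x i) = x j + (\<Sum>i\<in>I - {j}. x i)" using sum.remove[OF assms(1) j(1)] by simp
  also have "(\<Sum>i\<in>I - {j}. x i) = 0" using z by simp
  finally have 1: "(\<Sum>i\<in>I. x i) = x j" by simp
  have "(\<Sum>i\<in>I. (x i)\<^sup>2) = (x j)\<^sup>2 + (\<Sum>i\<in>I - {j}. (x i)\<^sup>2)" using sum.remove[OF assms(1) j(1)] by simp
  also have "(\<Sum>i\<in>I - {j}. (x i)\<^sup>2) = 0" using z by simp
  finally show ?thesis using 1 by simp
qed

context pat begin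

definition nx :: "real \<Rightarrow> real" where
  "nx a = a + 1 + (\<Sum>v\<in>Sc a. cmod (c v) + r v)"

definition sq :: "real \<Rightarrow> nat \<Rightarrow> real" where
  "sq R0 i = (nx ^^ i) R0"

lemma Sc_term: "v \<in> Sc a \<Longrightarrow> 0 \<le> cmod (c v) + r v"
  using rpos[of v] Sc_V by (smt (verit) norm_ge_zero subsetD)

lemma nx_ge: "nx a \<ge> a + 1"
proof -
  have "(\<Sum>v\<in>Sc a. cmod (c v) + r v) \<ge> 0"
    by (intro sum_nonneg Sc_term)
  thus ?thesis by (simp add: nx_def)
qed

lemma nx_disk: assumes "v \<in> Sc a" "a \<ge> 0" shows "disk (P v) \<subseteq> ball 0 (nx a)"
proof
  fix y assume y: "y \<in> disk (P v)"
  have "cmod y \<le> cmod (c v) + cmod (y - c v)" using norm_triangle_ineq[of "c v" "y - c v"] by simp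
  also have "\<dots> \<le> cmod (c v) + r v" using y by (simp add: mem_disk)
  also have "\<dots> \<le> (\<Sum>v\<in>Sc a. cmod (c v) + r v)"
    using assms finite_Sc Sc_term by (intro member_le_sum) auto
  also have "\<dots> < nx a" unfolding nx_def using assms(2) by simp
  finally show "y \<in> ball 0 (nx a)" by simp
qed

lemma sq_Suc: "sq R0 (Suc i) = nx (sq R0 i)" by (simp add: sq_def)

lemma sq_mono: "i \<le> j \<Longrightarrow> sq R0 i \<le> sq R0 j"
  by (rule lift_Suc_mono_le[of "sq R0"]) (use nx_ge sq_Suc in \<open>auto intro: order_trans[OF _ nx_ge]\<close>)

lemma sq_ge: "sq R0 i \<ge> R0"
  using sq_mono[of 0 i R0] by (simp add: sq_def)

lemma sq_disj:
  assumes R0: "R0 > 0" and ij: "i < j" and v: "v \<in> Sc (sq R0 i)"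
  shows "v \<notin> Sc (sq R0 j)"
proof -
  have "disk (P v) \<subseteq> ball 0 (sq R0 (Suc i))"
    using nx_disk[OF v] sq_ge[of R0 i] R0 by (simp add: sq_Suc)
  also have "\<dots> \<subseteq> ball 0 (sq R0 j)" using sq_mono[of "Suc i" j R0] ij by auto
  finally show ?thesis by (auto simp: Sc_def)
qed

end

context pat begin

lemma MOD_bound:
  assumes v0: "v0 \<in> V" and N: "N > (0::nat)"
  shows "MOD V (paths_to_infinity adj {v0}) \<le> ennreal (720 / real N)"
proof -
  define R0 where "R0 = cmod (c v0) + r v0 + 1"
  have R0p: "R0 > 0" using rpos[OF v0] norm_ge_zero[of "c v0"] unfolding R0_def by linarith
  have sqp: "\<And>i. sq R0 i > 0" using sq_ge R0p by (metis less_le_trans)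
  have start: "disk (P v0) \<subseteq> ball 0 R0"
  proof
    fix y assume y: "y \<in> disk (P v0)"
    have "cmod y \<le> cmod (c v0) + cmod (y - c v0)" using norm_triangle_ineq[of "c v0" "y - c v0"] by simp
    also have "\<dots> \<le> cmod (c v0) + r v0" using y by (simp add: mem_disk)
    finally show "y \<in> ball 0 R0" by (simp add: R0_def)
  qed
  define \<eta> where "\<eta> v = (1 / real N) * (\<Sum>i<N. Wt (sq R0 i) v / sq R0 i)" for v
  have \<eta>_nn: "\<eta> v \<ge> 0" for v
    unfolding \<eta>_def using Wt_nonneg sqp N by (intro mult_nonneg_nonneg sum_nonneg divide_nonneg_pos) auto
  have adm: "admissible V (paths_to_infinity adj {v0}) \<eta>"
    unfolding admissible_def vertex_metric_def
  proof (intro conjI ballI)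
    fix \<gamma> assume "\<gamma> \<in> paths_to_infinity adj {v0}"
    then obtain p where \<gamma>: "\<gamma> = range p" and p0: "p 0 = v0" and p: "\<And>n. adj (p n) (p (Suc n))"
      and inf: "infinite (range p)" unfolding paths_to_infinity_def by auto
    have pV: "\<And>n. p n \<in> V" using p adjI by metis
    define K where "K = cball (0::complex) (2 * sq R0 (N - 1))"
    have fin: "finite {v\<in>V. disk (P v) \<inter> K \<noteq> {}}" unfolding K_def by (intro finite_meet) auto
    have "\<not> range p \<subseteq> {v\<in>V. disk (P v) \<inter> K \<noteq> {}}" using inf finite_subset[OF _ fin] by blast
    then obtain n where "p n \<notin> {v\<in>V. disk (P v) \<inter> K \<noteq> {}}" by auto
    then have n: "disk (P (p n)) \<inter> K = {}" using pV by auto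
    define F where "F = p ` {..n}"
    have fF: "finite F" by (simp add: F_def)
    have cross: "1 \<le> (\<Sum>v\<in>F. Wt (sq R0 i) v / sq R0 i)" if i: "i < N" for i
    proof -
      have "sq R0 i \<le> sq R0 (N - 1)" using i by (intro sq_mono) auto
      hence "cball 0 (2 * sq R0 i) \<subseteq> K" unfolding K_def by (intro cball_subset_cball_iff[THEN iffD2]) auto
      hence fin: "disk (P (p n)) \<inter> cball 0 (2 * sq R0 i) = {}" using n by blast
      have st: "disk (P (p 0)) \<subseteq> ball 0 (sq R0 i)" using start sq_ge[of R0 i] p0 by auto
      have "sq R0 i \<le> (\<Sum>v\<in>F. Wt (sq R0 i) v)"
        unfolding F_def by (rule crossing[OF sqp p st fin])
      hence "1 \<le> (\<Sum>v\<in>F. Wt (sq R0 i) v) / sq R0 i" using sqp[of i] by simp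
      also have "\<dots> = (\<Sum>v\<in>F. Wt (sq R0 i) v / sq R0 i)" by (simp add: sum_divide_distrib)
      finally show ?thesis .
    qed
    have "(\<Sum>v\<in>F. \<eta> v) = (1 / real N) * (\<Sum>i<N. \<Sum>v\<in>F. Wt (sq R0 i) v / sq R0 i)"
      unfolding \<eta>_def sum_distrib_left[symmetric] by (simp only: sum.swap[of _ F])
    also have "\<dots> \<ge> (1 / real N) * (\<Sum>i<N. 1)"
      using cross N by (intro mult_left_mono sum_mono) auto
    finally have s1: "(\<Sum>v\<in>F. \<eta> v) \<ge> 1" using N by simp
    have "ennreal 1 \<le> ennreal (\<Sum>v\<in>F. \<eta> v)" using s1 by (simp add: ennreal_leI)
    also have "\<dots> = (\<Sum>v\<in>F. ennreal (\<eta> v))" using \<eta>_nn by (simp add: sum_ennreal)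
    also have "\<dots> = infsum (\<lambda>v. ennreal (\<eta> v)) F" using fF by simp
    also have "\<dots> \<le> infsum (\<lambda>v. ennreal (\<eta> v)) \<gamma>"
      using \<gamma> by (intro infsum_mono_neutral) (auto simp: F_def intro: nonneg_summable_on_complete)
    finally show "1 \<le> curve_length \<eta> \<gamma>" by (simp add: curve_length_def)
  qed (use \<eta>_nn in auto)
  define T where "T = (\<Union>i<N. Sc (sq R0 i))"
  have fT: "finite T" by (simp add: T_def finite_Sc)
  have TV: "T \<subseteq> V" using Sc_V by (auto simp: T_def)
  have zero: "\<eta> v = 0" if "v \<notin> T" for v
    using that unfolding \<eta>_def T_def by (auto simp: Wt_def)
  have "metric_area V \<eta> = infsum (\<lambda>v. ennreal ((\<eta> v)\<^sup>2)) T"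
    unfolding metric_area_def using TV zero by (intro infsum_cong_neutral) auto
  also have "\<dots> = ennreal (\<Sum>v\<in>T. (\<eta> v)\<^sup>2)" using fT by (simp add: sum_ennreal)
  also have "(\<Sum>v\<in>T. (\<eta> v)\<^sup>2) \<le> 720 / real N"
  proof -
    have sqv: "(\<eta> v)\<^sup>2 = (1 / real N)\<^sup>2 * (\<Sum>i<N. (Wt (sq R0 i) v / sq R0 i)\<^sup>2)" for v
    proof -
      have "(\<Sum>i<N. Wt (sq R0 i) v / sq R0 i)\<^sup>2 = (\<Sum>i<N. (Wt (sq R0 i) v / sq R0 i)\<^sup>2)"
      proof (rule sq_sum_single)
        fix i j assume "i \<in> {..<N}" "j \<in> {..<N}" "i \<noteq> j"
        then have "v \<notin> Sc (sq R0 i) \<or> v \<notin> Sc (sq R0 j)"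
          using sq_disj[OF R0p] by (metis linorder_neqE_nat)
        then show "Wt (sq R0 i) v / sq R0 i = 0 \<or> Wt (sq R0 j) v / sq R0 j = 0"
          by (auto simp: Wt_def)
      qed simp
      then show ?thesis unfolding \<eta>_def power_mult_distrib by (simp only:)
    qed
    have inner: "(\<Sum>v\<in>T. (Wt (sq R0 i) v / sq R0 i)\<^sup>2) \<le> 720" if i: "i < N" for i
    proof -
      have "(\<Sum>v\<in>T. (Wt (sq R0 i) v / sq R0 i)\<^sup>2) = (\<Sum>v\<in>Sc (sq R0 i). (Wt (sq R0 i) v / sq R0 i)\<^sup>2)"
        using fT i by (intro sum.mono_neutral_right) (auto simp: T_def Wt_def)
      also have "\<dots> = (\<Sum>v\<in>Sc (sq R0 i). (Wt (sq R0 i) v)\<^sup>2) / (sq R0 i)\<^sup>2"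
        by (simp add: sum_divide_distrib power_divide)
      also have "\<dots> \<le> 720 * (sq R0 i)\<^sup>2 / (sq R0 i)\<^sup>2"
        using area_scale[OF sqp[of i]] sqp[of i] by (intro divide_right_mono) auto
      also have "\<dots> = 720" using sqp[of i] by simp
      finally show ?thesis .
    qed
    have "(\<Sum>v\<in>T. (\<eta> v)\<^sup>2) = (1 / real N)\<^sup>2 * (\<Sum>i<N. \<Sum>v\<in>T. (Wt (sq R0 i) v / sq R0 i)\<^sup>2)"
      unfolding sqv by (simp add: sum_distrib_left[symmetric] sum.swap[of _ T])
    also have "\<dots> \<le> (1 / real N)\<^sup>2 * (\<Sum>i<N. 720)"
      using inner by (intro mult_left_mono sum_mono) auto
    also have "\<dots> = 720 / real N" using N by (simp add: power2_eq_square)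
    finally show ?thesis .
  qed
  hence "ennreal (\<Sum>v\<in>T. (\<eta> v)\<^sup>2) \<le> ennreal (720 / real N)" by (rule ennreal_leI)
  finally have "metric_area V \<eta> \<le> ennreal (720 / real N)" .
  moreover have "MOD V (paths_to_infinity adj {v0}) \<le> metric_area V \<eta>"
    unfolding MOD_def using adm by (intro INF_lower) auto
  ultimately show ?thesis by simp
qed

end

lemma pat_from_assms:
  fixes V :: "'v set" and adj :: "'v \<Rightarrow> 'v \<Rightarrow> bool" and \<Theta> :: "'v set \<Rightarrow> real"
    and P :: "'v \<Rightarrow> complex \<times> real"
  assumes sg: "simple_graph V adj"
    and th: "\<forall>u w. adj u w \<longrightarrow> 0 \<le> \<Theta> {u, w} \<and> \<Theta> {u, w} \<le> pi / 2"
    and re: "realizes P V adj \<Theta>"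
    and lf: "locally_finite_pattern P V"
  shows "pat V adj P"
proof
  have dp: "disk_pattern (P ` V)" using re by (simp add: realizes_def)
  show rp: "\<And>v. v \<in> V \<Longrightarrow> snd (P v) > 0" using dp by (auto simp: disk_pattern_def)
  have inter: "\<And>u w. u \<in> V \<Longrightarrow> w \<in> V \<Longrightarrow> u \<noteq> w \<Longrightarrow>
      disk (P u) \<inter> disk (P w) \<noteq> {} \<longleftrightarrow> tilde_adj V adj \<Theta> u w"
    using re by (simp add: realizes_def)
  have ang: "\<And>u w. u \<in> V \<Longrightarrow> w \<in> V \<Longrightarrow> tilde_adj V adj \<Theta> u w \<Longrightarrow>
      has_dihedral_angle (P u) (P w) (tilde_Theta adj \<Theta> u w)"
    using re by (simp add: realizes_def)
  show "\<And>u w. adj u w \<Longrightarrow> u \<in> V \<and> w \<in> V \<and> disk (P u) \<inter> disk (P w) \<noteq> {}"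
  proof -
    fix u w assume a: "adj u w"
    then have "u \<in> V" "w \<in> V" "u \<noteq> w" using sg by (auto simp: simple_graph_def)
    moreover have "tilde_adj V adj \<Theta> u w" using a by (simp add: tilde_adj_def)
    ultimately show "u \<in> V \<and> w \<in> V \<and> disk (P u) \<inter> disk (P w) \<noteq> {}" using inter by blast
  qed
  show "locally_finite_pattern P V" by (rule lf)
  fix u w assume u: "u \<in> V" and w: "w \<in> V" and ne: "u \<noteq> w"
  have ru: "snd (P u) > 0" and rw: "snd (P w) > 0" using rp u w by auto
  show "(cmod (fst (P u) - fst (P w)))\<^sup>2 \<ge> (snd (P u))\<^sup>2 + (snd (P w))\<^sup>2"
  proof (cases "disk (P u) \<inter> disk (P w) = {}")
    case True
    then have "cmod (fst (P u) - fst (P w)) > snd (P u) + snd (P w)"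
      using disks_disjoint_far[OF ru rw] by (simp add: disk_def)
    then have "(cmod (fst (P u) - fst (P w)))\<^sup>2 \<ge> (snd (P u) + snd (P w))\<^sup>2"
      using ru rw by (intro power_mono) auto
    moreover have "(snd (P u) + snd (P w))\<^sup>2 \<ge> (snd (P u))\<^sup>2 + (snd (P w))\<^sup>2"
      using ru rw by (simp add: power2_sum)
    ultimately show ?thesis by linarith
  next
    case False
    then have ta: "tilde_adj V adj \<Theta> u w" using inter u w ne by blast
    define \<theta> where "\<theta> = tilde_Theta adj \<Theta> u w"
    have tle: "\<theta> \<le> pi / 2" using th by (auto simp: \<theta>_def tilde_Theta_def)
    obtain p where p: "p \<in> circ (P u)" "p \<in> circ (P w)"
      and pt: "\<theta> = vec_angle (- \<i> * (p - fst (P u))) (\<i> * (p - fst (P w)))"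
      using ang[OF u w ta] unfolding has_dihedral_angle_def \<theta>_def by blast
    have "cmod (p - fst (P u)) = snd (P u)" "cmod (p - fst (P w)) = snd (P w)"
      using p by (auto simp: circ_def dist_norm norm_minus_commute)
    from angle_sep[OF ru rw this pt tle] show ?thesis .
  qed
qed

theorem lemma5p2:
  fixes V :: "'v set" and adj :: "'v \<Rightarrow> 'v \<Rightarrow> bool" and \<Theta> :: "'v set \<Rightarrow> real"
    and P :: "'v \<Rightarrow> complex \<times> real"
  assumes "simple_graph V adj"
    and "connected_graph V adj"
    and "\<forall>u w. adj u w \<longrightarrow> 0 \<le> \<Theta> {u, w} \<and> \<Theta> {u, w} \<le> pi / 2"
    and "realizes P V adj \<Theta>"
    and "locally_finite_pattern P V"
  shows "VEL_parabolic V adj"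
proof -
  interpret pat V adj P using pat_from_assms assms(1,3,4,5) by blast
  obtain v0 where v0: "v0 \<in> V" using assms(2) by (auto simp: connected_graph_def)
  let ?G = "paths_to_infinity adj {v0}"
  have "MOD V ?G \<le> 0"
  proof (rule ennreal_le_epsilon)
    fix e :: real assume e: "0 < e"
    define N where "N = nat \<lceil>720 / e\<rceil> + 1"
    have N: "N > 0" by (simp add: N_def)
    have "720 / e \<le> real N" unfolding N_def by linarith
    hence "720 / real N \<le> e" using e N by (simp add: field_simps)
    hence "ennreal (720 / real N) \<le> ennreal e" by (rule ennreal_leI)
    with MOD_bound[OF v0 N] show "MOD V ?G \<le> 0 + ennreal e" by simp
  qed
  hence "MOD V ?G = 0" by simp
  hence "VEL V ?G = \<infinity>" by (simp add: VEL_def)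
  thus ?thesis unfolding VEL_parabolic_def using v0 by (intro exI[of _ "{v0}"]) auto
qed

end
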